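(* Let $G_N$ be the Poissonian random graph with capacities $\lambda_1,\dots,\lambda_N$, and let $A_1\ne A_2$ be two distinct nodes. Fix integers $k,t\ge0$. Conditionally on $\mathcal N^{(1)}_k$ and $\mathcal N^{(2)}_t$ and given that $\mathcal N^{(1)}_k\cap\mathcal N^{(2)}_t=\emptyset$, the number of edges between the nodes of $\partial\mathcal N^{(1)}_k$ and the nodes of $\partial\mathcal N^{(2)}_t$ is Poisson distributed with mean $$\frac{\underline C^{(1)}_{k+1}\,\underline C^{(2)}_{t+1}}{l_N},\qquad\text{where } \underline C^{(1)}_{k+1}=\sum_{i\in\partial\mathcal N^{(1)}_k}\lambda_i,\ \ \underline C^{(2)}_{t+1}=\sum_{j\in\partial\mathcal N^{(2)}_t}\lambda_j.$$
   Context: Poissonian random graph: on nodes $\{1,\dots,N\}$ with capacities $\lambda_i>0$ and $l_N=\sum_i\lambda_i$, the numbers of edges $E_{ij}$ between distinct nodes $i,j$ are independent Poisson random variables with mean $\lambda_i\lambda_j/l_N$ (multiple edges allowed). For a node $A_i$, $\partial\mathcal N^{(i)}_k=\{j: d(A_i,j)=k\}$ and $\mathcal N^{(i)}_k=\{j: d(A_i,j)\le k\}$, with $d$ the graph distance. *)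

theory Defs
  imports "HOL-Probability.Probability"
begin

text \<open>Nodes are 1..N. A realisation of the multigraph is a function
  g :: nat \<times> nat \<Rightarrow> nat giving the number of edges g (i,j) between i < j.\<close>

definition node_pairs :: "nat \<Rightarrow> (nat \<times> nat) set" where
  "node_pairs N = {(i, j). 1 \<le> i \<and> i < j \<and> j \<le> N}"

definition total_cap :: "nat \<Rightarrow> (nat \<Rightarrow> real) \<Rightarrow> real" where
  "total_cap N lam = (\<Sum>i\<in>{1..N}. lam i)"

definition poisson_graph :: "nat \<Rightarrow> (nat \<Rightarrow> real) \<Rightarrow> (nat \<times> nat \<Rightarrow> nat) pmf" where
  "poisson_graph N lam =
     Pi_pmf (node_pairs N) 0
       (\<lambda>(i, j). poisson_pmf (lam i * lam j / total_cap N lam))"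

definition edges :: "(nat \<times> nat \<Rightarrow> nat) \<Rightarrow> nat \<Rightarrow> nat \<Rightarrow> nat" where
  "edges g i j = g (min i j, max i j)"

text \<open>Closed neighbourhood N_k = {j. d(a,j) \<le> k}, via graph distance.\<close>
fun nbhd :: "nat \<Rightarrow> (nat \<times> nat \<Rightarrow> nat) \<Rightarrow> nat \<Rightarrow> nat \<Rightarrow> nat set" where
  "nbhd N g a 0 = {a}"
| "nbhd N g a (Suc k) = nbhd N g a k \<union>
     {j \<in> {1..N}. \<exists>i\<in>nbhd N g a k. i \<noteq> j \<and> edges g i j > 0}"

definition sphere_nbhd :: "nat \<Rightarrow> (nat \<times> nat \<Rightarrow> nat) \<Rightarrow> nat \<Rightarrow> nat \<Rightarrow> nat set" where
  "sphere_nbhd N g a k =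
     (case k of 0 \<Rightarrow> nbhd N g a 0 | Suc m \<Rightarrow> nbhd N g a (Suc m) - nbhd N g a m)"

definition edges_between :: "(nat \<times> nat \<Rightarrow> nat) \<Rightarrow> nat set \<Rightarrow> nat set \<Rightarrow> nat" where
  "edges_between g X Y = (\<Sum>i\<in>X. \<Sum>j\<in>Y. edges g i j)"

end

theory Submission
  imports Defs
begin

lemma prob_pair_times:
  "measure_pmf.prob (pair_pmf M N) (A \<times> B) = measure_pmf.prob M A * measure_pmf.prob N B"
proof -
  have "measure_pmf.prob (pair_pmf M N) (A \<times> B) =
        measure_pmf.prob (pair_pmf M N) ((A \<times> B) \<inter> set_pmf (pair_pmf M N))"
    by (rule measure_Int_set_pmf[symmetric])
  also have "(A \<times> B) \<inter> set_pmf (pair_pmf M N) = (A \<inter> set_pmf M) \<times> (B \<inter> set_pmf N)"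
    by auto
  also have "measure_pmf.prob (pair_pmf M N) \<dots> =
      measure_pmf.prob M (A \<inter> set_pmf M) * measure_pmf.prob N (B \<inter> set_pmf N)"
    by (intro measure_pmf_prob_product) auto
  finally show ?thesis by (simp add: measure_Int_set_pmf)
qed

lemma poisson_add:
  assumes a: "(a::real) > 0" and b: "b > 0"
  shows "map_pmf (\<lambda>(u,v). u + v) (pair_pmf (poisson_pmf a) (poisson_pmf b)) = poisson_pmf (a + b)"
proof (rule pmf_eqI)
  fix n :: nat
  let ?M = "pair_pmf (poisson_pmf a) (poisson_pmf b)"
  have "pmf (map_pmf (\<lambda>(u,v). u + v) ?M) n = measure_pmf.prob ?M ((\<lambda>(u,v). u + v) -` {n})"
    by (rule pmf_map)
  also have "(\<lambda>(u,v). u + v) -` {n} = (\<lambda>u. (u, n - u)) ` {..n}"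
    by (force simp: image_iff)
  also have "measure_pmf.prob ?M \<dots> = sum (pmf ?M) ((\<lambda>u. (u, n - u)) ` {..n})"
    by (intro measure_measure_pmf_finite) auto
  also have "\<dots> = (\<Sum>u\<le>n. pmf ?M (u, n - u))"
    by (subst sum.reindex) (auto simp: inj_on_def)
  also have "\<dots> = (\<Sum>u\<le>n. (a ^ u / fact u * exp (-a)) * (b ^ (n - u) / fact (n - u) * exp (-b)))"
    using a b by (simp add: pmf_pair)
  also have "\<dots> = (\<Sum>u\<le>n. of_nat (n choose u) * a ^ u * b ^ (n - u)) / fact n * exp (- (a + b))"
    unfolding sum_divide_distrib sum_distrib_right
  proof (intro sum.cong refl)
    fix u assume "u \<in> {..n}"
    then have "u \<le> n" by simp
    then show "a ^ u / fact u * exp (- a) * (b ^ (n - u) / fact (n - u) * exp (- b)) =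
         of_nat (n choose u) * a ^ u * b ^ (n - u) / fact n * exp (- (a + b))"
      by (simp add: binomial_fact exp_add[symmetric] field_simps)
  qed
  also have "\<dots> = pmf (poisson_pmf (a + b)) n"
    using a b by (simp add: binomial_ring[symmetric] add.commute)
  finally show "pmf (map_pmf (\<lambda>(u,v). u + v) ?M) n = pmf (poisson_pmf (a + b)) n" .
qed

lemma poisson_sum:
  fixes B :: "'a set" and p :: "'a \<Rightarrow> nat pmf"
  assumes "finite B" "B \<noteq> {}" "\<forall>x\<in>B. p x = poisson_pmf (r x)" "\<forall>x\<in>B. r x > 0"
  shows "map_pmf (\<lambda>g. \<Sum>x\<in>B. g x) (Pi_pmf B dflt p) = poisson_pmf (\<Sum>x\<in>B. r x)"
  using assms
proof (induction B rule: finite_ne_induct)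
  case (singleton x)
  then show ?case by (simp add: Pi_pmf_singleton pmf.map_comp o_def)
next
  case (insert x F)
  have "map_pmf (\<lambda>g. \<Sum>x\<in>insert x F. g x) (Pi_pmf (insert x F) dflt p) =
        map_pmf (\<lambda>(u,v). u + v) (pair_pmf (p x) (map_pmf (\<lambda>g. \<Sum>x\<in>F. g x) (Pi_pmf F dflt p)))"
    using insert.hyps
    apply (subst Pi_pmf_insert, simp, simp)
    apply (simp add: pmf.map_comp o_def pair_map_pmf2 case_prod_beta)
    apply (intro map_pmf_cong refl)
    subgoal for z
      apply (cases z)
      apply (simp)
      apply (intro sum.cong refl)
      apply auto
      done
    done
  also have "\<dots> = poisson_pmf (\<Sum>x\<in>insert x F. r x)"
    using insert by (simp add: poisson_add sum_pos)
  finally show ?case .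
qed

lemma nbhd_subset: "a \<in> {1..N} \<Longrightarrow> nbhd N g a m \<subseteq> {1..N}"
  by (induction m) auto

lemma nbhd_mono: "m \<le> m' \<Longrightarrow> nbhd N g a m \<subseteq> nbhd N g a m'"
  by (induction rule: dec_induct) auto

lemma nbhd_local:
  assumes "\<forall>m'<m. \<forall>i\<in>nbhd N g1 a m'. \<forall>j\<in>{1..N}. i \<noteq> j \<longrightarrow> edges g1 i j = edges g2 i j"
  shows "nbhd N g1 a m = nbhd N g2 a m"
  using assms
proof (induction m)
  case 0
  then show ?case by simp
next
  case (Suc m)
  then have IH: "nbhd N g1 a m = nbhd N g2 a m"
    by (metis less_SucI)
  have "\<forall>i\<in>nbhd N g1 a m. \<forall>j\<in>{1..N}. i \<noteq> j \<longrightarrow> edges g1 i j = edges g2 i j"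
    using Suc.prems by auto
  then show ?case using IH by auto
qed

lemma phi_eq: "(min i j, max i j) = (min a b, max (a::nat) b) \<Longrightarrow> i = a \<or> i = b"
  by (auto simp: min_def max_def split: if_splits)

theorem lemma3p3:
  fixes N :: nat and lam :: "nat \<Rightarrow> real" and A1 A2 k t :: nat
    and S1 S2 :: "nat \<Rightarrow> nat set" and n :: nat
  assumes cap_pos: "\<forall>i\<in>{1..N}. lam i > 0"
    and A1: "A1 \<in> {1..N}" and A2: "A2 \<in> {1..N}" and distinct: "A1 \<noteq> A2"
    and disj: "S1 k \<inter> S2 t = {}"
    and pos: "measure_pmf.prob (poisson_graph N lam)
               {g. (\<forall>m\<le>k. nbhd N g A1 m = S1 m) \<and> (\<forall>m\<le>t. nbhd N g A2 m = S2 m)} > 0"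
  shows "measure_pmf.prob (poisson_graph N lam)
           {g. (\<forall>m\<le>k. nbhd N g A1 m = S1 m) \<and> (\<forall>m\<le>t. nbhd N g A2 m = S2 m)
               \<and> edges_between g (sphere_nbhd N g A1 k) (sphere_nbhd N g A2 t) = n}
         / measure_pmf.prob (poisson_graph N lam)
           {g. (\<forall>m\<le>k. nbhd N g A1 m = S1 m) \<and> (\<forall>m\<le>t. nbhd N g A2 m = S2 m)}
       = (let C1 = (\<Sum>i\<in>(case k of 0 \<Rightarrow> S1 0 | Suc m \<Rightarrow> S1 (Suc m) - S1 m). lam i);
              C2 = (\<Sum>j\<in>(case t of 0 \<Rightarrow> S2 0 | Suc m \<Rightarrow> S2 (Suc m) - S2 m). lam j);
              mu = C1 * C2 / total_cap N lam
          in mu ^ n / fact n * exp (- mu))"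
proof -
  define P where "P = poisson_graph N lam"
  define D where "D = node_pairs N"
  define l where "l = total_cap N lam"
  define p where "p = (\<lambda>(i::nat, j::nat). poisson_pmf (lam i * lam j / l))"
  define r where "r = (\<lambda>(i::nat, j::nat). lam i * lam j / l)"
  define E where "E = (\<lambda>g. (\<forall>m\<le>k. nbhd N g A1 m = S1 m) \<and> (\<forall>m\<le>t. nbhd N g A2 m = S2 m))"
  define T1 where "T1 = (case k of 0 \<Rightarrow> S1 0 | Suc m \<Rightarrow> S1 (Suc m) - S1 m)"
  define T2 where "T2 = (case t of 0 \<Rightarrow> S2 0 | Suc m \<Rightarrow> S2 (Suc m) - S2 m)"
  define \<phi> where "\<phi> = (\<lambda>(i::nat, j::nat). (min i j, max i j))"
  define B where "B = \<phi> ` (T1 \<times> T2)"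
  define R where "R = D - B"
  define Y where "Y = (\<lambda>g::nat \<times> nat \<Rightarrow> nat. \<Sum>x\<in>B. g x)"
  define h where "h = (\<lambda>(f::nat \<times> nat \<Rightarrow> nat, g::nat \<times> nat \<Rightarrow> nat) x. if x \<in> R then f x else g x)"
  have P_eq: "P = Pi_pmf D 0 p"
    by (simp add: P_def poisson_graph_def D_def p_def l_def)
  have l_pos: "l > 0"
    unfolding l_def total_cap_def using cap_pos A1 by (intro sum_pos) auto
  have finD: "finite D"
    unfolding D_def node_pairs_def
    by (rule finite_subset[of _ "{1..N} \<times> {1..N}"]) auto
  have Eset: "{g. (\<forall>m\<le>k. nbhd N g A1 m = S1 m) \<and> (\<forall>m\<le>t. nbhd N g A2 m = S2 m)} = {g. E g}"
    by (simp add: E_def)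
  from pos have "{g. E g} \<noteq> {}" unfolding Eset by (metis less_irrefl measure_empty)
  then obtain g0 where g0: "E g0" by auto
  have S1sub: "S1 m \<subseteq> {1..N}" if "m \<le> k" for m
    using g0 that nbhd_subset[OF A1] unfolding E_def by metis
  have S2sub: "S2 m \<subseteq> {1..N}" if "m \<le> t" for m
    using g0 that nbhd_subset[OF A2] unfolding E_def by metis
  have S1mono: "S1 m' \<subseteq> S1 m" if "m' \<le> m" "m \<le> k" for m m'
    using g0 that nbhd_mono[of m' m N g0 A1] unfolding E_def by auto
  have S2mono: "S2 m' \<subseteq> S2 m" if "m' \<le> m" "m \<le> t" for m m'
    using g0 that nbhd_mono[of m' m N g0 A2] unfolding E_def by auto
  have T1S: "T1 \<subseteq> S1 k" unfolding T1_def by (cases k) auto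
  have T2S: "T2 \<subseteq> S2 t" unfolding T2_def by (cases t) auto
  have T1N: "T1 \<subseteq> {1..N}" using T1S S1sub by auto
  have T2N: "T2 \<subseteq> {1..N}" using T2S S2sub by auto
  have finT1: "finite T1" using T1N finite_subset by blast
  have finT2: "finite T2" using T2N finite_subset by blast
  have T12: "T1 \<inter> T2 = {}" using T1S T2S disj by auto
  have av11: "S1 m' \<inter> T1 = {}" if mk: "m' < k" for m'
  proof -
    obtain k0 where k0: "k = Suc k0" using mk by (cases k) auto
    have "S1 m' \<subseteq> S1 k0" using S1mono[of m' k0] mk k0 by auto
    then show ?thesis unfolding T1_def k0 by auto
  qed
  have av22: "S2 m' \<inter> T2 = {}" if mk: "m' < t" for m'
  proof -
    obtain t0 where t0: "t = Suc t0" using mk by (cases t) auto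
    have "S2 m' \<subseteq> S2 t0" using S2mono[of m' t0] mk t0 by auto
    then show ?thesis unfolding T2_def t0 by auto
  qed
  have av12: "S1 m' \<inter> T2 = {}" if "m' \<le> k" for m'
    using S1mono[OF that order_refl] T2S disj by auto
  have av21: "S2 m' \<inter> T1 = {}" if "m' \<le> t" for m'
    using S2mono[OF that order_refl] T1S disj by auto
  have inR: "\<phi> (i, j) \<in> R" if "i \<in> {1..N}" "j \<in> {1..N}" "i \<noteq> j" "i \<notin> T1" "i \<notin> T2" for i j
  proof -
    have "\<phi> (i, j) \<in> D" using that unfolding \<phi>_def D_def node_pairs_def by (auto simp: min_def max_def)
    moreover have "\<phi> (i, j) \<notin> B"
    proof
      assume "\<phi> (i, j) \<in> B"
      then obtain a b where ab: "a \<in> T1" "b \<in> T2" "\<phi> (i, j) = \<phi> (a, b)" unfolding B_def by auto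
      then have "i = a \<or> i = b" using phi_eq unfolding \<phi>_def by auto
      then show False using ab that by auto
    qed
    ultimately show ?thesis unfolding R_def by auto
  qed
  have edges_phi: "edges g i j = g (\<phi> (i, j))" for g i j
    by (simp add: edges_def \<phi>_def)
  have Eloc: "E g2" if g1: "E g1" and agree: "\<forall>x\<in>R. g1 x = g2 x" for g1 g2
  proof -
    have "nbhd N g2 A1 m = S1 m" if "m \<le> k" for m
    proof -
      have "nbhd N g1 A1 m = nbhd N g2 A1 m"
      proof (rule nbhd_local, intro allI impI ballI)
        fix m' i j assume m': "m' < m" and i: "i \<in> nbhd N g1 A1 m'" and j: "j \<in> {1..N}" and ij: "i \<noteq> j"
        have iS: "i \<in> S1 m'" using i g1 m' that unfolding E_def by auto
        have "\<phi> (i, j) \<in> R"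
          using inR[OF _ j ij] iS S1sub[of m'] av11[of m'] av12[of m'] m' that by (meson disjoint_iff less_imp_le_nat order.strict_trans2 subsetD)
        then show "edges g1 i j = edges g2 i j" using agree by (simp add: edges_phi)
      qed
      then show ?thesis using g1 that unfolding E_def by auto
    qed
    moreover have "nbhd N g2 A2 m = S2 m" if "m \<le> t" for m
    proof -
      have "nbhd N g1 A2 m = nbhd N g2 A2 m"
      proof (rule nbhd_local, intro allI impI ballI)
        fix m' i j assume m': "m' < m" and i: "i \<in> nbhd N g1 A2 m'" and j: "j \<in> {1..N}" and ij: "i \<noteq> j"
        have iS: "i \<in> S2 m'" using i g1 m' that unfolding E_def by auto
        have "\<phi> (i, j) \<in> R"
          using inR[OF _ j ij] iS S2sub[of m'] av22[of m'] av21[of m'] m' that by (meson disjoint_iff less_imp_le_nat order.strict_trans2 subsetD)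
        then show "edges g1 i j = edges g2 i j" using agree by (simp add: edges_phi)
      qed
      then show ?thesis using g1 that unfolding E_def by auto
    qed
    ultimately show ?thesis unfolding E_def by auto
  qed
  have BD: "B \<subseteq> D"
  proof
    fix x assume "x \<in> B"
    then obtain a b where ab: "a \<in> T1" "b \<in> T2" "x = \<phi> (a, b)" unfolding B_def by auto
    then have "a \<noteq> b" using T12 by auto
    then show "x \<in> D" using ab T1N T2N unfolding \<phi>_def D_def node_pairs_def
      by (auto simp: min_def max_def)
  qed
  have finB: "finite B" using BD finD finite_subset by blast
  have finR: "finite R" using finD unfolding R_def by auto
  have DRB: "D = R \<union> B" using BD unfolding R_def by auto
  have P_split: "P = map_pmf h (pair_pmf (Pi_pmf R 0 p) (Pi_pmf B 0 p))"
    unfolding P_eq DRB h_def by (rule Pi_pmf_union) (use finR finB R_def in auto)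
  have hE: "E (h (f, g)) \<longleftrightarrow> E f" for f g
  proof -
    have "\<forall>x\<in>R. h (f, g) x = f x" by (simp add: h_def)
    then show ?thesis using Eloc[of "h (f, g)" f] Eloc[of f "h (f, g)"] by auto
  qed
  have hY: "Y (h (f, g)) = Y g" for f g
    unfolding Y_def h_def R_def by (intro sum.cong) auto
  have injphi: "inj_on \<phi> (T1 \<times> T2)"
  proof (rule inj_onI, clarify)
    fix i j i' j' assume i: "i \<in> T1" "j \<in> T2" "i' \<in> T1" "j' \<in> T2" and e: "\<phi> (i, j) = \<phi> (i', j')"
    have e1: "(min i j, max i j) = (min i' j', max i' j')" using e by (simp add: \<phi>_def)
    have e2: "(min j i, max j i) = (min j' i', max j' i')" using e1 by (simp add: min.commute max.commute)
    have "i = i' \<or> i = j'" using phi_eq[OF e1] .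
    then have "i = i'" using i T12 by auto
    moreover have "j = j' \<or> j = i'" using phi_eq[OF e2] .
    then have "j = j'" using i T12 by auto
    ultimately show "i = i' \<and> j = j'" by simp
  qed
  have XonE: "edges_between g (sphere_nbhd N g A1 k) (sphere_nbhd N g A2 t) = Y g" if "E g" for g
  proof -
    have s1: "sphere_nbhd N g A1 k = T1"
      proof (cases k)
      case 0
      have "nbhd N g A1 0 = S1 0" using that unfolding E_def by blast
      then show ?thesis unfolding sphere_nbhd_def T1_def 0 nat.case by (simp only:)
    next
      case (Suc q)
      have "nbhd N g A1 (Suc q) = S1 (Suc q)" "nbhd N g A1 q = S1 q"
        using that Suc unfolding E_def by (simp_all del: nbhd.simps)
      then show ?thesis unfolding sphere_nbhd_def T1_def Suc nat.case by (simp only:)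
    qed
    have s2: "sphere_nbhd N g A2 t = T2"
      proof (cases t)
      case 0
      have "nbhd N g A2 0 = S2 0" using that unfolding E_def by blast
      then show ?thesis unfolding sphere_nbhd_def T2_def 0 nat.case by (simp only:)
    next
      case (Suc q)
      have "nbhd N g A2 (Suc q) = S2 (Suc q)" "nbhd N g A2 q = S2 q"
        using that Suc unfolding E_def by (simp_all del: nbhd.simps)
      then show ?thesis unfolding sphere_nbhd_def T2_def Suc nat.case by (simp only:)
    qed
    have "edges_between g T1 T2 = (\<Sum>i\<in>T1. \<Sum>j\<in>T2. g (\<phi> (i, j)))"
      unfolding edges_between_def by (simp add: edges_phi)
    also have "\<dots> = (\<Sum>z\<in>T1 \<times> T2. g (\<phi> z))"
      by (simp add: sum.cartesian_product)
    also have "\<dots> = Y g"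
      unfolding Y_def B_def by (subst sum.reindex[OF injphi]) simp
    finally show ?thesis using s1 s2 by simp
  qed
  have num: "measure_pmf.prob P {g. E g \<and> edges_between g (sphere_nbhd N g A1 k) (sphere_nbhd N g A2 t) = n}
      = measure_pmf.prob (Pi_pmf R 0 p) {f. E f} * measure_pmf.prob (Pi_pmf B 0 p) {g. Y g = n}"
  proof -
    have "{g. E g \<and> edges_between g (sphere_nbhd N g A1 k) (sphere_nbhd N g A2 t) = n} = {g. E g \<and> Y g = n}"
      using XonE by auto
    moreover have "h -` {g. E g \<and> Y g = n} = {f. E f} \<times> {g. Y g = n}"
      using hE hY by auto
    ultimately show ?thesis unfolding P_split by (simp add: prob_pair_times)
  qed
  have den: "measure_pmf.prob P {g. E g} = measure_pmf.prob (Pi_pmf R 0 p) {f. E f}"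
  proof -
    have "h -` {g. E g} = {f. E f} \<times> UNIV"
      using hE by auto
    then show ?thesis unfolding P_split by (simp add: prob_pair_times)
  qed
  have denpos: "measure_pmf.prob (Pi_pmf R 0 p) {f. E f} > 0"
    using pos unfolding Eset den[symmetric] P_def .
  have rphi: "r (\<phi> (i, j)) = lam i * lam j / l" for i j
    unfolding r_def \<phi>_def by (cases "i \<le> j") (simp_all add: min_def max_def mult.commute)
  have sumr: "(\<Sum>x\<in>B. r x) = (\<Sum>i\<in>T1. lam i) * (\<Sum>j\<in>T2. lam j) / l"
  proof -
    have "(\<Sum>x\<in>B. r x) = (\<Sum>z\<in>T1 \<times> T2. r (\<phi> z))"
      unfolding B_def by (subst sum.reindex[OF injphi]) simp
    also have "\<dots> = (\<Sum>z\<in>T1 \<times> T2. lam (fst z) * lam (snd z) / l)"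
      by (intro sum.cong) (auto simp: rphi)
    also have "\<dots> = (\<Sum>i\<in>T1. \<Sum>j\<in>T2. lam i * lam j / l)"
      by (simp add: sum.cartesian_product case_prod_beta)
    also have "\<dots> = (\<Sum>i\<in>T1. lam i) * (\<Sum>j\<in>T2. lam j) / l"
      by (simp add: sum_product sum_divide_distrib)
    finally show ?thesis .
  qed
  have probY: "measure_pmf.prob (Pi_pmf B 0 p) {g. Y g = n} =
      (let mu = (\<Sum>i\<in>T1. lam i) * (\<Sum>j\<in>T2. lam j) / l in mu ^ n / fact n * exp (- mu))"
  proof -
    have "measure_pmf.prob (Pi_pmf B 0 p) {g. Y g = n} = pmf (map_pmf Y (Pi_pmf B 0 p)) n"
      by (simp add: pmf_map vimage_def)
    also have "\<dots> = (let mu = (\<Sum>x\<in>B. r x) in mu ^ n / fact n * exp (- mu))"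
    proof (cases "B = {}")
      case True
      then show ?thesis by (simp add: Y_def indicator_def)
    next
      case False
      have pr: "\<forall>x\<in>B. p x = poisson_pmf (r x)"
        by (auto simp: p_def r_def)
      have rpos: "\<forall>x\<in>B. r x > 0"
      proof
        fix x assume "x \<in> B"
        then obtain a b where ab: "a \<in> T1" "b \<in> T2" "x = \<phi> (a, b)" unfolding B_def by auto
        then have "lam a > 0" "lam b > 0" using T1N T2N cap_pos by auto
        then show "r x > 0" using ab rphi l_pos by simp
      qed
      have "map_pmf Y (Pi_pmf B 0 p) = poisson_pmf (\<Sum>x\<in>B. r x)"
        unfolding Y_def by (rule poisson_sum[OF finB False pr rpos])
      moreover have "(\<Sum>x\<in>B. r x) > 0" using rpos finB False by (intro sum_pos) auto
      ultimately show ?thesis by simp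
    qed
    finally show ?thesis by (simp add: sumr)
  qed
  have lhs: "measure_pmf.prob (poisson_graph N lam)
           {g. (\<forall>m\<le>k. nbhd N g A1 m = S1 m) \<and> (\<forall>m\<le>t. nbhd N g A2 m = S2 m)
               \<and> edges_between g (sphere_nbhd N g A1 k) (sphere_nbhd N g A2 t) = n}
      = measure_pmf.prob P {g. E g \<and> edges_between g (sphere_nbhd N g A1 k) (sphere_nbhd N g A2 t) = n}"
    by (simp add: P_def E_def conj_assoc)
  show ?thesis
    unfolding lhs Eset
    using num den denpos probY
    by (simp add: P_def T1_def T2_def l_def)
qed

end
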